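(* Let $k\in\mathbb{N}$ and $\widetilde{M}_k=\{(x,y,z)\in\mathbb{C}^3 : x^2+y^2+z^{k+1}=0\}$, with coordinate ring $\mathbb{C}[\widetilde{M}_k]$ and holomorphic symplectic form $\widetilde{\omega}=\frac{dx\wedge dy}{(k+1)z^k}=\frac{dy\wedge dz}{2x}=\frac{dz\wedge dx}{2y}$ on $\widetilde{M}_k\setminus\{0\}$. Define the tangent vector fields \begin{align*} \widetilde{V}^x&=(k+1)z^k\partial_y-2y\partial_z,\quad \widetilde{V}^y=-(k+1)z^k\partial_x+2x\partial_z,\quad \widetilde{V}^z=2y\partial_x-2x\partial_y,\\ \widetilde{\Lambda}&=(k+1)x\partial_x+(k+1)y\partial_y+2z\partial_z. \end{align*} Then the space of polynomial vector fields on $\widetilde{M}_k$ equals \[ \big(\mathbb{C}[\widetilde{M}_k]\widetilde{V}^x+\mathbb{C}[\widetilde{M}_k]\widetilde{V}^y+\mathbb{C}[\widetilde{M}_k]\widetilde{V}^z\big)\oplus\mathrm{span}_{\mathbb{C}}\{1,z,\dots,z^{k-1}\}\cdot\widetilde{\Lambda}, \] the vector fields $\widetilde{V}^x,\widetilde{V}^y,\widetilde{V}^z$ are Hamiltonian with respect to $\widetilde{\omega}$ on $\widetilde{M}_k\setminus\{0\}$, and $\widetilde{\Lambda}$ is not a holomorphic symplectic vector field.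
   Context: Polynomial vector fields on an affine variety are the (restrictions to it of) polynomial vector fields on $\mathbb{C}^3$ tangent to it, i.e. derivations of the coordinate ring. A vector field $V$ is Hamiltonian if $i_V\widetilde{\omega}$ is exact on the regular part, and symplectic if $i_V\widetilde{\omega}$ is closed there. *)

theory Defs
  imports "HOL-Analysis.Analysis"
begin

type_synonym pt3 = "complex \<times> complex \<times> complex"
type_synonym vf3 = "pt3 \<Rightarrow> pt3"

definition poly3 :: "(pt3 \<Rightarrow> complex) \<Rightarrow> bool" where
  "poly3 f \<longleftrightarrow> (\<exists>(c::nat \<Rightarrow> nat \<Rightarrow> nat \<Rightarrow> complex) N.
     f = (\<lambda>(x,y,z). \<Sum>a\<le>N. \<Sum>b\<le>N. \<Sum>d\<le>N. c a b d * x^a * y^b * z^d))"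

definition poly_vf :: "vf3 \<Rightarrow> bool" where
  "poly_vf V \<longleftrightarrow> poly3 (\<lambda>p. fst (V p)) \<and> poly3 (\<lambda>p. fst (snd (V p))) \<and> poly3 (\<lambda>p. snd (snd (V p)))"

definition Mk :: "nat \<Rightarrow> pt3 set" where
  "Mk k = {(x,y,z). x^2 + y^2 + z^(k+1) = 0}"

text \<open>A vector field on C^3 is tangent to M_k iff V(f) vanishes on M_k, f = x^2+y^2+z^(k+1).\<close>
definition tangent_Mk :: "nat \<Rightarrow> vf3 \<Rightarrow> bool" where
  "tangent_Mk k V \<longleftrightarrow> (\<forall>p\<in>Mk k. case p of (x,y,z) \<Rightarrow> case V p of (a1,a2,a3) \<Rightarrow>
      a1 * (2*x) + a2 * (2*y) + a3 * (of_nat (k+1) * z^k) = 0)"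

definition vscale :: "complex \<Rightarrow> pt3 \<Rightarrow> pt3" where
  "vscale c v = (case v of (a1,a2,a3) \<Rightarrow> (c*a1, c*a2, c*a3))"

definition Vx :: "nat \<Rightarrow> vf3" where
  "Vx k = (\<lambda>(x,y,z). (0, of_nat (k+1) * z^k, -2*y))"
definition Vy :: "nat \<Rightarrow> vf3" where
  "Vy k = (\<lambda>(x,y,z). (- of_nat (k+1) * z^k, 0, 2*x))"
definition Vz :: "vf3" where
  "Vz = (\<lambda>(x,y,z). (2*y, -2*x, 0))"
definition Lam :: "nat \<Rightarrow> vf3" where
  "Lam k = (\<lambda>(x,y,z). (of_nat (k+1) * x, of_nat (k+1) * y, 2*z))"

text \<open>The holomorphic symplectic form on M_k minus 0, evaluated on tangent vectors,
  using whichever of the three (equal) expressions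
  dx^dy/((k+1)z^k) = dy^dz/(2x) = dz^dx/(2y) has nonzero denominator.\<close>
definition omega :: "nat \<Rightarrow> pt3 \<Rightarrow> pt3 \<Rightarrow> pt3 \<Rightarrow> complex" where
  "omega k p V W = (case p of (x,y,z) \<Rightarrow> case V of (a1,a2,a3) \<Rightarrow> case W of (b1,b2,b3) \<Rightarrow>
     if of_nat (k+1) * z^k \<noteq> 0 then (a1*b2 - a2*b1) / (of_nat (k+1) * z^k)
     else if x \<noteq> 0 then (a2*b3 - a3*b2) / (2*x)
     else (a3*b1 - a1*b3) / (2*y))"

text \<open>A 1-form alpha (p, tangent vector) on S is exact if alpha = dH for a function H,
  i.e. along every differentiable curve in S the derivative of H is alpha of the velocity.\<close>
definition exact_on :: "pt3 set \<Rightarrow> (pt3 \<Rightarrow> pt3 \<Rightarrow> complex) \<Rightarrow> bool" where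
  "exact_on S \<alpha> \<longleftrightarrow> (\<exists>H :: pt3 \<Rightarrow> complex. \<forall>(\<gamma>::real \<Rightarrow> pt3) \<gamma>' t.
      (\<forall>s. \<gamma> s \<in> S) \<longrightarrow> (\<gamma> has_vector_derivative \<gamma>') (at t) \<longrightarrow>
      ((\<lambda>s. H (\<gamma> s)) has_vector_derivative \<alpha> (\<gamma> t) \<gamma>') (at t))"

definition closed_on :: "pt3 set \<Rightarrow> (pt3 \<Rightarrow> pt3 \<Rightarrow> complex) \<Rightarrow> bool" where
  "closed_on S \<alpha> \<longleftrightarrow> (\<forall>p\<in>S. \<exists>e>0. exact_on (S \<inter> ball p e) \<alpha>)"

definition hamiltonian :: "nat \<Rightarrow> vf3 \<Rightarrow> bool" where
  "hamiltonian k V \<longleftrightarrow> exact_on (Mk k - {0}) (\<lambda>p w. omega k p (V p) w)"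

definition symplectic_vf :: "nat \<Rightarrow> vf3 \<Rightarrow> bool" where
  "symplectic_vf k V \<longleftrightarrow> closed_on (Mk k - {0}) (\<lambda>p w. omega k p (V p) w)"

end

theory Submission
  imports Defs
begin


lemma K_nz[simp]: "1 + (of_nat k :: complex) \<noteq> 0" "(of_nat k :: complex) + 1 \<noteq> 0" "(of_nat (k+1) :: complex) \<noteq> 0"
  using of_nat_neq_0[of k, where 'a=complex] by (simp_all add: add.commute)

definition mon :: "nat \<times> nat \<times> nat \<Rightarrow> pt3 \<Rightarrow> complex" where
  "mon m p = fst p ^ fst m * fst (snd p) ^ fst (snd m) * snd (snd p) ^ snd (snd m)"

definition gp :: "(pt3 \<Rightarrow> complex) \<Rightarrow> bool" where
  "gp f \<longleftrightarrow> (\<exists>S c. finite S \<and> (\<forall>p. f p = (\<Sum>m\<in>S. c m * mon m p)))"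

definition addm :: "nat \<times> nat \<times> nat \<Rightarrow> nat \<times> nat \<times> nat \<Rightarrow> nat \<times> nat \<times> nat" where
  "addm m n = (fst m + fst n, fst (snd m) + fst (snd n), snd (snd m) + snd (snd n))"

lemma mon_addm: "mon (addm m n) p = mon m p * mon n p"
  by (simp add: mon_def addm_def power_add)

lemma gp_const[intro]: "gp (\<lambda>p. c)"
  unfolding gp_def
  by (rule exI[of _ "{(0,0,0)}"], rule exI[of _ "\<lambda>_. c"]) (simp add: mon_def)

lemma gp_X[intro]: "gp (\<lambda>p. fst p)"
  unfolding gp_def
  by (rule exI[of _ "{(1,0,0)}"], rule exI[of _ "\<lambda>_. 1"]) (simp add: mon_def)

lemma gp_Y[intro]: "gp (\<lambda>p. fst (snd p))"
  unfolding gp_def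
  by (rule exI[of _ "{(0,1,0)}"], rule exI[of _ "\<lambda>_. 1"]) (simp add: mon_def)

lemma gp_Z[intro]: "gp (\<lambda>p. snd (snd p))"
  unfolding gp_def
  by (rule exI[of _ "{(0,0,1)}"], rule exI[of _ "\<lambda>_. 1"]) (simp add: mon_def)

lemma gp_add[intro]:
  assumes "gp f" "gp g" shows "gp (\<lambda>p. f p + g p)"
proof -
  obtain S1 c1 where 1: "finite S1" "\<And>p. f p = (\<Sum>m\<in>S1. c1 m * mon m p)" using assms(1) unfolding gp_def by blast
  obtain S2 c2 where 2: "finite S2" "\<And>p. g p = (\<Sum>m\<in>S2. c2 m * mon m p)" using assms(2) unfolding gp_def by blast
  define c where "c m = (if m \<in> S1 then c1 m else 0) + (if m \<in> S2 then c2 m else 0)" for m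
  have "f p + g p = (\<Sum>m\<in>S1\<union>S2. c m * mon m p)" for p
  proof -
    have a: "(\<Sum>m\<in>S1\<union>S2. (if m \<in> S1 then c1 m else 0) * mon m p) = (\<Sum>m\<in>S1. c1 m * mon m p)"
      by (rule sum.mono_neutral_cong_right) (use 1 2 in auto)
    have b: "(\<Sum>m\<in>S1\<union>S2. (if m \<in> S2 then c2 m else 0) * mon m p) = (\<Sum>m\<in>S2. c2 m * mon m p)"
      by (rule sum.mono_neutral_cong_right) (use 1 2 in auto)
    show ?thesis using a b 1 2 by (simp add: c_def distrib_right sum.distrib)
  qed
  thus ?thesis unfolding gp_def using 1 2 by (intro exI[of _ "S1\<union>S2"] exI[of _ c]) auto
qed

lemma gp_mult[intro]:
  assumes "gp f" "gp g" shows "gp (\<lambda>p. f p * g p)"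
proof -
  obtain S1 c1 where 1: "finite S1" "\<And>p. f p = (\<Sum>m\<in>S1. c1 m * mon m p)" using assms(1) unfolding gp_def by blast
  obtain S2 c2 where 2: "finite S2" "\<And>p. g p = (\<Sum>m\<in>S2. c2 m * mon m p)" using assms(2) unfolding gp_def by blast
  define h where "h q = addm (fst q) (snd q)" for q
  define c where "c m = (\<Sum>q\<in>{q\<in>S1\<times>S2. h q = m}. c1 (fst q) * c2 (snd q))" for m
  have "f p * g p = (\<Sum>m\<in>h ` (S1\<times>S2). c m * mon m p)" for p
  proof -
    have "f p * g p = (\<Sum>q\<in>S1\<times>S2. c1 (fst q) * c2 (snd q) * mon (h q) p)"
    proof -
      have "f p * g p = (\<Sum>i\<in>S1. \<Sum>j\<in>S2. c1 i * c2 j * mon (h (i,j)) p)"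
        unfolding 1(2) 2(2) sum_product h_def mon_addm
        by (intro sum.cong refl) (simp add: algebra_simps)
      also have "\<dots> = (\<Sum>q\<in>S1\<times>S2. c1 (fst q) * c2 (snd q) * mon (h q) p)"
        by (simp add: sum.cartesian_product')
      finally show ?thesis .
    qed
    also have "\<dots> = (\<Sum>m\<in>h ` (S1\<times>S2). \<Sum>q\<in>{q\<in>S1\<times>S2. h q = m}. c1 (fst q) * c2 (snd q) * mon (h q) p)"
      by (rule sum.image_gen) (use 1 2 in auto)
    also have "\<dots> = (\<Sum>m\<in>h ` (S1\<times>S2). c m * mon m p)"
      unfolding c_def sum_distrib_right by (rule sum.cong) auto
    finally show ?thesis .
  qed
  thus ?thesis unfolding gp_def using 1 2 by (intro exI[of _ "h ` (S1\<times>S2)"] exI[of _ c]) auto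
qed

lemma gp_uminus[intro]: "gp f \<Longrightarrow> gp (\<lambda>p. - f p)"
  using gp_mult[OF gp_const[of "-1"], of f] by simp

lemma gp_diff[intro]: "gp f \<Longrightarrow> gp g \<Longrightarrow> gp (\<lambda>p. f p - g p)"
  using gp_add[of f "\<lambda>p. - g p"] gp_uminus[of g] by simp

lemma gp_pow[intro]: "gp f \<Longrightarrow> gp (\<lambda>p. f p ^ n)"
  by (induction n) auto

lemma gp_sum[intro]: "finite A \<Longrightarrow> (\<And>i. i \<in> A \<Longrightarrow> gp (f i)) \<Longrightarrow> gp (\<lambda>p. \<Sum>i\<in>A. f i p)"
  by (induction A rule: finite_induct) auto

lemma gp_cong: "gp f \<Longrightarrow> (\<And>p. f p = g p) \<Longrightarrow> gp g"
proof -
  assume "gp f" "\<And>p. f p = g p"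
  then have "f = g" by auto
  thus ?thesis using \<open>gp f\<close> by simp
qed

lemma gp_poly3: "gp f \<longleftrightarrow> poly3 f"
proof
  assume "gp f"
  then obtain S c where 1: "finite S" "\<And>p. f p = (\<Sum>m\<in>S. c m * mon m p)" unfolding gp_def by blast
  define N where "N = Max (insert 0 ((\<lambda>m. fst m + fst (snd m) + snd (snd m)) ` S))"
  have bnd: "m \<in> S \<Longrightarrow> fst m \<le> N \<and> fst (snd m) \<le> N \<and> snd (snd m) \<le> N" for m
  proof -
    assume "m \<in> S"
    hence "fst m + fst (snd m) + snd (snd m) \<le> N" unfolding N_def using 1(1) by (intro Max_ge) auto
    thus ?thesis by auto
  qed
  define c' where "c' a b d = (if (a,b,d) \<in> S then c (a,b,d) else 0)" for a b d
  have "f p = (\<Sum>a\<le>N. \<Sum>b\<le>N. \<Sum>d\<le>N. c' a b d * fst p^a * fst (snd p)^b * snd (snd p)^d)" for p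
  proof -
    have "(\<Sum>a\<le>N. \<Sum>b\<le>N. \<Sum>d\<le>N. c' a b d * fst p^a * fst (snd p)^b * snd (snd p)^d)
        = (\<Sum>m\<in>{..N}\<times>{..N}\<times>{..N}. c' (fst m) (fst (snd m)) (snd (snd m)) * mon m p)"
      by (simp add: sum.cartesian_product' mon_def mult_ac)
    also have "\<dots> = (\<Sum>m\<in>S. c m * mon m p)"
      by (rule sum.mono_neutral_cong_right) (use bnd in \<open>auto simp: c'_def\<close>)
    finally show ?thesis using 1 by simp
  qed
  thus "poly3 f" unfolding poly3_def by (intro exI[of _ c'] exI[of _ N]) (auto simp: case_prod_unfold)
next
  assume "poly3 f"
  then obtain c N where f: "f = (\<lambda>(x,y,z). \<Sum>a\<le>N. \<Sum>b\<le>N. \<Sum>d\<le>N. c a b d * x^a * y^b * z^d)"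
    unfolding poly3_def by blast
  have "gp (\<lambda>p. \<Sum>a\<le>N. \<Sum>b\<le>N. \<Sum>d\<le>N. c a b d * fst p^a * fst (snd p)^b * snd (snd p)^d)"
    by (intro gp_sum gp_mult gp_pow gp_const gp_X gp_Y gp_Z finite_atMost)
  thus "gp f" unfolding f case_prod_unfold .
qed



lemma gp_rep: "gp f \<Longrightarrow> \<exists>S c. finite S \<and> (\<forall>p. f p = (\<Sum>m\<in>S. c m * mon m p))"
  unfolding gp_def by blast

lemma gp_cont: assumes "gp f" shows "continuous_on UNIV f"
proof -
  obtain S c where 1: "finite S" "\<And>p. f p = (\<Sum>m\<in>S. c m * mon m p)" using gp_rep[OF assms] by blast
  have "f = (\<lambda>p. \<Sum>m\<in>S. c m * mon m p)" using 1 by auto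
  moreover have "continuous_on UNIV (\<lambda>p. \<Sum>m\<in>S. c m * mon m p)"
    unfolding mon_def by (intro continuous_intros)
  ultimately show ?thesis by simp
qed

lemma gp_isCont: "gp f \<Longrightarrow> isCont f p"
  using gp_cont continuous_on_eq_continuous_at open_UNIV by blast

lemma gp_isCont_comp: fixes g :: "complex \<Rightarrow> pt3" shows "gp f \<Longrightarrow> continuous (at t) g \<Longrightarrow> continuous (at t) (\<lambda>s. f (g s))"
  using continuous_at_compose[of t g f] gp_isCont[of f "g t"] by (simp add: o_def)

lemma cont_zero:
  fixes h :: "complex \<Rightarrow> complex"
  assumes "isCont h 0" "eventually (\<lambda>t. h t = 0) (at (0::complex))"
  shows "h 0 = 0"
proof -
  have "(h \<longlongrightarrow> h 0) (at 0)" using assms(1) isCont_def by blast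
  hence "((\<lambda>t. 0) \<longlongrightarrow> h 0) (at (0::complex))"
    using tendsto_cong[OF assms(2)] by simp
  thus ?thesis using LIM_const_eq by metis
qed

lemma cont_zero':
  fixes h :: "complex \<Rightarrow> complex"
  assumes "isCont h 0" "\<And>t. t \<noteq> 0 \<Longrightarrow> h t = 0"
  shows "h 0 = 0"
  using assms by (intro cont_zero) (auto simp: eventually_at_filter)

lemma gp_div_y:
  assumes "gp f"
  shows "\<exists>q. gp q \<and> (\<forall>x y z. f (x,y,z) = f (x,0,z) + y * q (x,y,z))"
proof -
  obtain S c where 1: "finite S" "\<And>p. f p = (\<Sum>m\<in>S. c m * mon m p)" using gp_rep[OF assms] by blast
  define q where "q p = (\<Sum>m\<in>S. c m * fst p ^ fst m * ((if fst (snd m) = 0 then 0 else 1) * fst (snd p) ^ (fst (snd m) - 1)) * snd (snd p) ^ snd (snd m))" for p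
  have "gp q" unfolding q_def[abs_def] by (intro gp_sum gp_mult gp_pow gp_const gp_X gp_Y gp_Z 1)
  moreover have "f (x,y,z) = f (x,0,z) + y * q (x,y,z)" for x y z
  proof -
    have t: "c m * mon m (x,y,z) = c m * mon m (x,0,z) + y * (c m * x ^ fst m * ((if fst (snd m) = 0 then 0 else 1) * y ^ (fst (snd m) - 1)) * z ^ snd (snd m))" for m
      by (cases "fst (snd m)") (auto simp: mon_def algebra_simps)
    show ?thesis unfolding 1(2) q_def 
      by (simp only: t sum.distrib sum_distrib_left fst_conv snd_conv)
  qed
  ultimately show ?thesis by blast
qed

lemma pow_split: "(x::complex)^a = (if even a then 1 else x) * (x^2)^(a div 2)"
proof -
  have "x^a = x^(a mod 2 + 2 * (a div 2))" by simp
  also have "\<dots> = x^(a mod 2) * (x^2)^(a div 2)" unfolding power_add power_mult ..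
  finally show ?thesis by (simp add: odd_iff_mod_2_eq_one[symmetric] even_iff_mod_2_eq_zero)
qed

lemma gp_red_x:
  fixes f :: "pt3 \<Rightarrow> complex" and k :: nat
  assumes "gp f"
  shows "\<exists>(fe::pt3\<Rightarrow>complex) (fo::pt3\<Rightarrow>complex). gp fe \<and> gp fo \<and> (\<forall>x x' y z. fe (x,y,z) = fe (x',y,z) \<and> fo (x,y,z) = fo (x',y,z))
     \<and> (\<forall>x y z. x^2 = -(y^2 + z^(k+1)) \<longrightarrow> f (x,y,z) = fe (x,y,z) + x * fo (x,y,z))"
proof -
  obtain S c where 1: "finite S" "\<And>p. f p = (\<Sum>m\<in>S. c m * mon m p)" using gp_rep[OF assms] by blast
  define fe :: "pt3 \<Rightarrow> complex" where "fe p = (\<Sum>m\<in>S. c m * ((if even (fst m) then 1 else 0) * (-(fst (snd p)^2 + snd (snd p)^(k+1)))^(fst m div 2)) * fst (snd p) ^ fst (snd m) * snd (snd p) ^ snd (snd m))" for p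
  define fo :: "pt3 \<Rightarrow> complex" where "fo p = (\<Sum>m\<in>S. c m * ((if even (fst m) then 0 else 1) * (-(fst (snd p)^2 + snd (snd p)^(k+1)))^(fst m div 2)) * fst (snd p) ^ fst (snd m) * snd (snd p) ^ snd (snd m))" for p
  have "gp fe" unfolding fe_def[abs_def] by (intro gp_sum gp_mult gp_pow gp_const gp_X gp_Y gp_Z gp_uminus gp_add 1)
  moreover have "gp fo" unfolding fo_def[abs_def] by (intro gp_sum gp_mult gp_pow gp_const gp_X gp_Y gp_Z gp_uminus gp_add 1)
  moreover have "\<forall>x x' y z. fe (x,y,z) = fe (x',y,z) \<and> fo (x,y,z) = fo (x',y,z)"
    by (simp add: fe_def fo_def)
  moreover have "f (x,y,z) = fe (x,y,z) + x * fo (x,y,z)" if h: "x^2 = -(y^2 + z^(k+1))" for x y z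
  proof -
    have t: "x^a = (if even a then 1 else 0) * (-(y^2 + z^(k+1)))^(a div 2) + x * ((if even a then 0 else 1) * (-(y^2 + z^(k+1)))^(a div 2))" for a
      by (subst pow_split) (auto simp: h)
    show ?thesis unfolding 1(2) fe_def fo_def mon_def
      by (simp add: t sum_distrib_left sum.distrib[symmetric] algebra_simps)
  qed
  ultimately show ?thesis by blast
qed

lemma gp_split_z:
  fixes f :: "pt3 \<Rightarrow> complex" and k :: nat
  assumes "gp f"
  shows "\<exists>(l::nat\<Rightarrow>complex) (s::pt3\<Rightarrow>complex). gp s \<and> (\<forall>x y x' y' z. s (x,y,z) = s (x',y',z)) \<and>
     (\<forall>z. f (0,0,z) = (\<Sum>i<k. l i * z^i) + z^k * s (0,0,z))"
proof -
  obtain S c where 1: "finite S" "\<And>p. f p = (\<Sum>m\<in>S. c m * mon m p)" using gp_rep[OF assms] by blast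
  define w where "w m = c m * 0^fst m * 0^fst (snd m)" for m
  define l where "l i = (\<Sum>m\<in>S. if snd (snd m) = i then w m else 0)" for i
  define s :: "pt3 \<Rightarrow> complex" where "s p = (\<Sum>m\<in>S. w m * ((if k \<le> snd (snd m) then 1 else 0) * snd (snd p) ^ (snd (snd m) - k)))" for p
  have "gp s" unfolding s_def[abs_def] by (intro gp_sum gp_mult gp_pow gp_const gp_Z 1)
  moreover have "\<forall>x y x' y' z. s (x,y,z) = s (x',y',z)" by (simp add: s_def)
  moreover have "f (0,0,z) = (\<Sum>i<k. l i * z^i) + z^k * s (0,0,z)" for z
  proof -
    have aux: "(\<Sum>i<k. (if d = i then v else 0) * z^i) = v * (if d < k then z^d else 0)" for d v
    proof -
      have "(\<Sum>i<k. (if d = i then v else 0) * z^i) = (\<Sum>i<k. if i = d then v * z^d else 0)"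
        by (intro sum.cong) auto
      also have "\<dots> = v * (if d < k then z^d else 0)" by (subst sum.delta) auto
      finally show ?thesis .
    qed
    have a: "(\<Sum>i<k. l i * z^i) = (\<Sum>m\<in>S. w m * (if snd (snd m) < k then z^snd (snd m) else 0))"
      unfolding l_def sum_distrib_right
      by (subst sum.swap) (simp add: aux)
    have b: "z^k * s (0,0,z) = (\<Sum>m\<in>S. w m * (if k \<le> snd (snd m) then z^snd (snd m) else 0))"
      unfolding s_def sum_distrib_left
      by (intro sum.cong refl) (auto simp: power_add[symmetric])
    have "f (0,0,z) = (\<Sum>m\<in>S. w m * z^snd (snd m))"
      unfolding 1(2) w_def mon_def by (simp add: mult.assoc)
    also have "\<dots> = (\<Sum>m\<in>S. w m * (if snd (snd m) < k then z^snd (snd m) else 0)) + (\<Sum>m\<in>S. w m * (if k \<le> snd (snd m) then z^snd (snd m) else 0))"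
      by (simp add: sum.distrib[symmetric]) (intro sum.cong refl, auto)
    finally show ?thesis using a b by simp
  qed
  ultimately show ?thesis by blast
qed



lemma vd_fst: "(\<gamma> has_vector_derivative \<gamma>') (at t) \<Longrightarrow> ((\<lambda>s. fst (\<gamma> s)) has_vector_derivative fst \<gamma>') (at t)"
  unfolding has_vector_derivative_def by (drule has_derivative_fst) simp

lemma vd_snd: "(\<gamma> has_vector_derivative \<gamma>') (at t) \<Longrightarrow> ((\<lambda>s. snd (\<gamma> s)) has_vector_derivative snd \<gamma>') (at t)"
  unfolding has_vector_derivative_def by (drule has_derivative_snd) simp

lemma pow_pred_aux: "0 < n \<Longrightarrow> (z::complex) * z ^ (n - Suc 0) = z ^ n"
  by (cases n) auto

lemma vd_poly:
  fixes u v w :: "real \<Rightarrow> complex"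
  assumes "(u has_vector_derivative a) (at t)" "(v has_vector_derivative b) (at t)" "(w has_vector_derivative c) (at t)"
  shows "((\<lambda>s. u s^2 + v s^2 + w s^(k+1)) has_vector_derivative
      (a * (2 * u t) + b * (2 * v t) + c * (of_nat (k+1) * w t^k))) (at t)"
  using assms unfolding has_vector_derivative_def
  by (cases k) (auto intro!: derivative_eq_intros simp: fun_eq_iff algebra_simps scaleR_conv_of_real pow_pred_aux)

lemma curve_tangent:
  fixes \<gamma> :: "real \<Rightarrow> pt3"
  assumes "\<forall>s. \<gamma> s \<in> Mk k" "(\<gamma> has_vector_derivative \<gamma>') (at t)"
  shows "fst \<gamma>' * (2 * fst (\<gamma> t)) + fst (snd \<gamma>') * (2 * fst (snd (\<gamma> t)))
     + snd (snd \<gamma>') * (of_nat (k+1) * snd (snd (\<gamma> t))^k) = 0"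
proof -
  have d1: "((\<lambda>s. fst (\<gamma> s)) has_vector_derivative fst \<gamma>') (at t)" using vd_fst[OF assms(2)] .
  have d2: "((\<lambda>s. fst (snd (\<gamma> s))) has_vector_derivative fst (snd \<gamma>')) (at t)" using vd_fst[OF vd_snd[OF assms(2)]] .
  have d3: "((\<lambda>s. snd (snd (\<gamma> s))) has_vector_derivative snd (snd \<gamma>')) (at t)" using vd_snd[OF vd_snd[OF assms(2)]] .
  have "((\<lambda>s. fst (\<gamma> s)^2 + fst (snd (\<gamma> s))^2 + snd (snd (\<gamma> s))^(k+1)) has_vector_derivative
      (fst \<gamma>' * (2 * fst (\<gamma> t)) + fst (snd \<gamma>') * (2 * fst (snd (\<gamma> t)))
     + snd (snd \<gamma>') * (of_nat (k+1) * snd (snd (\<gamma> t))^k))) (at t)"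
    by (rule vd_poly[OF d1 d2 d3])
  moreover have "(\<lambda>s. fst (\<gamma> s)^2 + fst (snd (\<gamma> s))^2 + snd (snd (\<gamma> s))^(k+1)) = (\<lambda>s. 0)"
    using assms(1) by (auto simp: Mk_def case_prod_unfold)
  ultimately have "((\<lambda>s. 0) has_vector_derivative
      (fst \<gamma>' * (2 * fst (\<gamma> t)) + fst (snd \<gamma>') * (2 * fst (snd (\<gamma> t)))
     + snd (snd \<gamma>') * (of_nat (k+1) * snd (snd (\<gamma> t))^k))) (at t)" by simp
  from vector_derivative_unique_at[OF this has_vector_derivative_const] show ?thesis by simp
qed

lemma Mk_branch3:
  assumes "(x,y,z) \<in> Mk k" "(x,y,z) \<noteq> 0" "of_nat (k+1) * z^k = (0::complex)"
  shows "x \<noteq> 0"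
proof
  assume x: "x = 0"
  have z: "z^k = 0" using assms(3) by simp
  hence "k \<noteq> 0" by (cases k) auto
  hence z0: "z = 0" using z by simp
  have "y^2 = 0" using assms(1) x z0 by (simp add: Mk_def)
  hence "y = 0" by simp
  thus False using assms(2) x z0 by (simp add: zero_prod_def)
qed

lemma ham_generic:
  assumes "\<And>x y z b1 b2 b3. (x,y,z) \<in> Mk k \<Longrightarrow> (x,y,z) \<noteq> 0 \<Longrightarrow>
      b1 * (2*x) + b2 * (2*y) + b3 * (of_nat (k+1) * z^k) = 0 \<Longrightarrow> omega k (x,y,z) (V (x,y,z)) (b1,b2,b3) = - P (b1,b2,b3)"
    and "\<And>\<gamma> \<gamma>' t. (\<gamma> has_vector_derivative \<gamma>') (at t) \<Longrightarrow> ((\<lambda>s. P (\<gamma> s)) has_vector_derivative P \<gamma>') (at t)"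
  shows "hamiltonian k V"
  unfolding hamiltonian_def exact_on_def
proof (intro exI[of _ "\<lambda>p. - P p"] allI impI)
  fix \<gamma> :: "real \<Rightarrow> pt3" and \<gamma>' t
  assume g: "\<forall>s. \<gamma> s \<in> Mk k - {0}" and d: "(\<gamma> has_vector_derivative \<gamma>') (at t)"
  have tan: "fst \<gamma>' * (2 * fst (\<gamma> t)) + fst (snd \<gamma>') * (2 * fst (snd (\<gamma> t)))
     + snd (snd \<gamma>') * (of_nat (k+1) * snd (snd (\<gamma> t))^k) = 0"
    using curve_tangent[of \<gamma> k \<gamma>' t] g d by blast
  obtain x y z where p: "\<gamma> t = (x,y,z)" by (metis prod_cases3)
  obtain b1 b2 b3 where w: "\<gamma>' = (b1,b2,b3)" by (metis prod_cases3)
  have "omega k (\<gamma> t) (V (\<gamma> t)) \<gamma>' = - P \<gamma>'"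
    using assms(1)[of x y z b1 b2 b3] g[rule_format, of t] tan unfolding p w by auto
  thus "((\<lambda>s. - P (\<gamma> s)) has_vector_derivative omega k (\<gamma> t) (V (\<gamma> t)) \<gamma>') (at t)"
    using has_vector_derivative_minus[OF assms(2)[OF d]] by simp
qed

lemma ham_Vx: "hamiltonian k (Vx k)"
proof (rule ham_generic[where P = fst])
  fix x y z b1 b2 b3
  assume M: "(x,y,z) \<in> Mk k" "(x,y,z) \<noteq> 0" and t: "b1 * (2*x) + b2 * (2*y) + b3 * (of_nat (k+1) * z^k) = 0"
  show "omega k (x,y,z) (Vx k (x,y,z)) (b1,b2,b3) = - fst (b1,b2,b3)"
  proof (cases "of_nat (k+1) * z^k = (0::complex)")
    case True
    hence "x \<noteq> 0" using Mk_branch3 M by blast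
    moreover have "b2 * y = - b1 * x" using t True by (simp add: algebra_simps add_eq_0_iff)
    ultimately show ?thesis using True by (simp add: omega_def Vx_def field_simps)
  next
    case False
    thus ?thesis by (simp add: omega_def Vx_def field_simps)
  qed
qed (rule vd_fst)

lemma ham_Vy: "hamiltonian k (Vy k)"
proof (rule ham_generic[where P = "\<lambda>p. fst (snd p)"])
  fix x y z b1 b2 b3
  assume M: "(x,y,z) \<in> Mk k" "(x,y,z) \<noteq> 0" and t: "b1 * (2*x) + b2 * (2*y) + b3 * (of_nat (k+1) * z^k) = 0"
  show "omega k (x,y,z) (Vy k (x,y,z)) (b1,b2,b3) = - fst (snd (b1,b2,b3))"
  proof (cases "of_nat (k+1) * z^k = (0::complex)")
    case True
    hence "x \<noteq> 0" using Mk_branch3 M by blast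
    thus ?thesis using True by (simp add: omega_def Vy_def field_simps)
  next
    case False
    thus ?thesis by (simp add: omega_def Vy_def field_simps)
  qed
qed (intro vd_fst vd_snd)

lemma ham_Vz: "hamiltonian k Vz"
proof (rule ham_generic[where P = "\<lambda>p. snd (snd p)"])
  fix x y z b1 b2 b3
  assume M: "(x,y,z) \<in> Mk k" "(x,y,z) \<noteq> 0" and t: "b1 * (2*x) + b2 * (2*y) + b3 * (of_nat (k+1) * z^k) = 0"
  show "omega k (x,y,z) (Vz (x,y,z)) (b1,b2,b3) = - snd (snd (b1,b2,b3))"
  proof (cases "of_nat (k+1) * z^k = (0::complex)")
    case True
    hence "x \<noteq> 0" using Mk_branch3 M by blast
    thus ?thesis using True by (simp add: omega_def Vz_def field_simps)
  next
    case False
    have "2 * y * b2 + 2 * x * b1 = - (b3 * (of_nat (k+1) * z^k))" using t by (simp add: algebra_simps add_eq_0_iff)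
    thus ?thesis using False by (simp add: omega_def Vz_def field_simps)
  qed
qed (intro vd_snd)



definition Gc :: "nat \<Rightarrow> real \<Rightarrow> real \<Rightarrow> pt3" where
  "Gc k u ph = (\<i> * of_real (u^(k+1) * cos ph), \<i> * of_real (u^(k+1) * sin ph), of_real (u^2))"

lemma Gc_cont: "isCont (\<lambda>q. Gc k (fst q) (snd q)) q"
  unfolding Gc_def by (intro continuous_intros)

lemma sq_aux: "(w * p1)^2 + (w * p2)^2 = (w::real)^2 * (p2^2 + p1^2)" by (simp add: power2_eq_square algebra_simps)

lemma Gc_Mk: "Gc k u ph \<in> Mk k"
proof -
  have r: "(u^(k+1) * cos ph)^2 + (u^(k+1) * sin ph)^2 = (u^2)^(k+1)"
  proof -
    have "(u^(k+1) * cos ph)^2 + (u^(k+1) * sin ph)^2 = (u^(k+1))^2 * ((sin ph)^2 + (cos ph)^2)"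
      by (rule sq_aux)
    also have "\<dots> = (u^2)^(k+1)" unfolding sin_cos_squared_add mult_1_right power_mult[symmetric]
      by (simp add: mult.commute)
    finally show ?thesis .
  qed
  have "(\<i> * complex_of_real (u^(k+1) * cos ph))^2 + (\<i> * complex_of_real (u^(k+1) * sin ph))^2 + (complex_of_real (u^2))^(k+1)
     = complex_of_real ((u^2)^(k+1) - ((u^(k+1) * cos ph)^2 + (u^(k+1) * sin ph)^2))"
    by (simp add: power_mult_distrib algebra_simps)
  also have "\<dots> = 0" using r by simp
  finally show ?thesis unfolding Gc_def Mk_def by simp
qed

lemma Gc_nz: "u \<noteq> 0 \<Longrightarrow> Gc k u ph \<noteq> 0"
  unfolding Gc_def by (simp add: zero_prod_def)

lemma Gc_deriv:
  assumes "(u has_real_derivative u') (at t)" "(ph has_real_derivative ph') (at t)"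
  shows "((\<lambda>s. Gc k (u s) (ph s)) has_vector_derivative
     (\<i> * of_real (of_nat (k+1) * u t^k * u' * cos (ph t) - u t^(k+1) * sin (ph t) * ph'),
      \<i> * of_real (of_nat (k+1) * u t^k * u' * sin (ph t) + u t^(k+1) * cos (ph t) * ph'),
      of_real (2 * u t * u'))) (at t)"
  unfolding Gc_def
  by (rule derivative_eq_intros assms refl | simp)+



definition Aq :: "real \<Rightarrow> real \<Rightarrow> real" where
  "Aq r s = - r * sin s - r^2 * (s + sin s * cos s) - r^3 * (sin s - (sin s)^3 / 3)"

lemma Aq_deriv: "(Aq r has_real_derivative (- ((1 + r * cos s)^2 * (r * cos s)))) (at s)"
proof -
  have "(Aq r has_real_derivative (- r * cos s - r^2 * (1 + cos s * cos s - sin s * sin s) - r^3 * (cos s - (sin s)^2 * cos s))) (at s)"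
    unfolding Aq_def[abs_def]
    by (auto intro!: derivative_eq_intros simp: power2_eq_square algebra_simps)
  moreover have "- r * cos s - r^2 * (1 + cos s * cos s - sin s * sin s) - r^3 * (cos s - (sin s)^2 * cos s)
      = - ((1 + r * cos s)^2 * (r * cos s))"
  proof -
    have ss: "sin s * sin s = 1 - cos s * cos s" using sin_squared_eq[of s] by (simp add: power2_eq_square)
    show ?thesis unfolding ss power2_eq_square by (simp add: algebra_simps power3_eq_cube)
  qed
  ultimately show ?thesis by simp
qed

lemma omega_Lam_Gc:
  assumes "u \<noteq> 0"
  shows "omega k (Gc k u ph) (Lam k (Gc k u ph))
     (\<i> * of_real (of_nat (k+1) * u^k * u' * cos ph - u^(k+1) * sin ph * ph'),
      \<i> * of_real (of_nat (k+1) * u^k * u' * sin ph + u^(k+1) * cos ph * ph'), Z) = of_real (- (u^2 * ph'))"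
proof -
  define U where "U = u^(k+1)"
  define X where "X = of_nat (k+1) * u^k * u' * cos ph - U * sin ph * ph'"
  define Y where "Y = of_nat (k+1) * u^k * u' * sin ph + U * cos ph * ph'"
  have zk: "of_nat (k+1) * (complex_of_real (u^2))^k \<noteq> 0" using assms by simp
  have ii: "(\<i> * a) * (\<i> * b) = - (a * b)" for a b :: complex
  proof -
    have "(\<i> * a) * (\<i> * b) = (\<i> * \<i>) * (a * b)" by (simp only: mult_ac)
    thus ?thesis by simp
  qed
  have "omega k (Gc k u ph) (Lam k (Gc k u ph)) (\<i> * of_real X, \<i> * of_real Y, Z)
      = (of_nat (k+1) * ((\<i> * of_real (U * cos ph)) * (\<i> * of_real Y)) - of_nat (k+1) * ((\<i> * of_real (U * sin ph)) * (\<i> * of_real X)))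
        / (of_nat (k+1) * (of_real (u^2))^k)"
    unfolding omega_def Gc_def Lam_def U_def using zk by (simp add: mult.assoc)
  also have "\<dots> = (of_nat (k+1) * of_real (- (U * cos ph * Y - U * sin ph * X))) / (of_nat (k+1) * of_real ((u^2)^k))"
    unfolding ii by (simp add: algebra_simps)
  also have "\<dots> = of_real (- (U * cos ph * Y - U * sin ph * X) / (u^2)^k)"
    by (subst mult_divide_mult_cancel_left) (simp_all add: of_real_divide)
  also have "U * cos ph * Y - U * sin ph * X = U^2 * ph' * ((sin ph)^2 + (cos ph)^2)"
    unfolding X_def Y_def power2_eq_square by algebra
  also have "- (U^2 * ph' * ((sin ph)^2 + (cos ph)^2)) / (u^2)^k = - (u^2 * ph')"
    using assms unfolding U_def by (simp add: field_simps power_mult[symmetric] power_add[symmetric] mult.commute power2_eq_square)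
  finally show ?thesis unfolding X_def Y_def U_def .
qed



lemma not_sympl: "\<not> symplectic_vf k (Lam k)"
proof
  assume "symplectic_vf k (Lam k)"
  define p0 where "p0 = Gc k 1 0"
  have p0S: "p0 \<in> Mk k - {0}" unfolding p0_def using Gc_Mk Gc_nz by auto
  obtain e where e: "e > 0" and ex: "exact_on ((Mk k - {0}) \<inter> ball p0 e) (\<lambda>p w. omega k p (Lam k p) w)"
    using \<open>symplectic_vf k (Lam k)\<close> p0S unfolding symplectic_vf_def closed_on_def by blast
  obtain H where H: "\<And>(\<gamma>::real \<Rightarrow> pt3) \<gamma>' t. (\<forall>s. \<gamma> s \<in> (Mk k - {0}) \<inter> ball p0 e) \<Longrightarrow> (\<gamma> has_vector_derivative \<gamma>') (at t) \<Longrightarrow>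
      ((\<lambda>s. H (\<gamma> s)) has_vector_derivative omega k (\<gamma> t) (Lam k (\<gamma> t)) \<gamma>') (at t)"
    using ex unfolding exact_on_def by blast
  obtain d where d: "d > 0" and dd: "\<And>q. dist q (1::real,0::real) < d \<Longrightarrow> dist (Gc k (fst q) (snd q)) (Gc k 1 0) < e"
    using Gc_cont[of "(1,0)" k] e unfolding continuous_at_eps_delta by fastforce
  define r where "r = min (d/2) (1/2)"
  have r: "r > 0" "r < d" "r \<le> 1/2" using d unfolding r_def by auto
  define u where "u s = 1 + r * cos s" for s
  define ph where "ph s = r * sin s" for s
  define \<gamma> where "\<gamma> s = Gc k (u s) (ph s)" for s
  have upos: "u s > 0" for s
  proof -
    have "r * (-1) \<le> r * cos s" using r(1) by (intro mult_left_mono) auto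
    thus ?thesis using r unfolding u_def by linarith
  qed
  have inS: "\<gamma> s \<in> (Mk k - {0}) \<inter> ball p0 e" for s
  proof -
    have "dist (u s, ph s) (1::real, 0::real) = sqrt ((r * cos s)^2 + (r * sin s)^2)"
      unfolding dist_Pair_Pair u_def ph_def by (simp add: dist_real_def)
    also have "\<dots> = r" using r(1) by (simp add: sq_aux real_sqrt_abs)
    finally have "dist (Gc k (u s) (ph s)) (Gc k 1 0) < e" using dd[of "(u s, ph s)"] r by simp
    thus ?thesis unfolding \<gamma>_def p0_def using Gc_Mk Gc_nz upos[of s] by (auto simp: dist_commute)
  qed
  define \<gamma>' :: "real \<Rightarrow> pt3" where "\<gamma>' s = (\<i> * of_real (of_nat (k+1) * u s^k * (- r * sin s) * cos (ph s) - u s^(k+1) * sin (ph s) * (r * cos s)),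
      \<i> * of_real (of_nat (k+1) * u s^k * (- r * sin s) * sin (ph s) + u s^(k+1) * cos (ph s) * (r * cos s)),
      of_real (2 * u s * (- r * sin s)))" for s
  have gd: "(\<gamma> has_vector_derivative \<gamma>' s) (at s)" for s
  proof -
    have "(u has_real_derivative (- r * sin s)) (at s)" unfolding u_def[abs_def]
      by (auto intro!: derivative_eq_intros)
    moreover have "(ph has_real_derivative (r * cos s)) (at s)" unfolding ph_def[abs_def]
      by (auto intro!: derivative_eq_intros)
    ultimately show ?thesis using Gc_deriv[of u "- r * sin s" s ph "r * cos s" k]
      unfolding \<gamma>_def[abs_def] \<gamma>'_def by simp
  qed
  have Hd: "((\<lambda>s. H (\<gamma> s)) has_vector_derivative of_real (- ((1 + r * cos s)^2 * (r * cos s)))) (at s)" for s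
  proof -
    have "omega k (\<gamma> s) (Lam k (\<gamma> s)) (\<gamma>' s) = of_real (- ((u s)^2 * (r * cos s)))"
      unfolding \<gamma>_def \<gamma>'_def using omega_Lam_Gc[of "u s" k "ph s" "- r * sin s" "r * cos s"] upos[of s] by simp
    thus ?thesis using H[of \<gamma> "\<gamma>' s" s] inS gd by (simp add: u_def)
  qed
  have "((\<lambda>s. H (\<gamma> s) - of_real (Aq r s)) has_vector_derivative 0) (at s)" for s
    using has_vector_derivative_diff[OF Hd has_vector_derivative_of_real[OF Aq_deriv[of r s]]] by simp
  then obtain c where c: "\<And>s. H (\<gamma> s) - of_real (Aq r s) = c"
    using has_vector_derivative_zero_constant[of UNIV "\<lambda>s. H (\<gamma> s) - of_real (Aq r s)"] by auto
  have "\<gamma> (2*pi) = \<gamma> 0" unfolding \<gamma>_def u_def ph_def by simp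
  hence "H (\<gamma> 0) - of_real (Aq r (2*pi)) = H (\<gamma> 0) - (of_real (Aq r 0) :: complex)" using c[of "2*pi"] c[of 0] by simp
  hence "of_real (Aq r (2*pi)) = (of_real (Aq r 0) :: complex)" by simp
  hence "Aq r (2*pi) = Aq r 0" by simp
  moreover have "Aq r (2*pi) = - (r^2 * (2*pi))" "Aq r 0 = 0" unfolding Aq_def by simp_all
  ultimately show False using r(1) pi_gt_zero by simp
qed



lemma final_alg:
  fixes x y z zk K A1 A2 A3 b1 b2 b3 q r s L :: complex
  assumes K: "K \<noteq> 0" and M: "x^2 + y^2 + z * zk = 0"
    and e1: "A1 = (- y * b2 - K / 2 * zk * b3) + x * b1"
    and e2: "A2 = (y * b1 - zk * q / 2) + x * b2"
    and e3: "A3 = (y * q + 2 * z * b1) / K + x * b3"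
    and eb: "b1 = L + y * r + zk * s"
  shows "(A1, A2, A3) = vscale (- q / (2*K) + (- z * r + y * s) / K) (0, K * zk, -2*y)
       + vscale (b3 / 2 - x * s / K) (- K * zk, 0, 2*x)
       + vscale (- b2 / 2 + x * r / 2) (2*y, -2*x, 0)
       + vscale (L / K) (K * x, K * y, 2*z)"
proof -
  have c1: "A1 = - (b3 / 2 - x * s / K) * (K * zk) + (- b2 / 2 + x * r / 2) * (2*y) + L / K * (K * x)"
    unfolding e1 eb using K by (simp add: field_simps; simp add: algebra_simps)
  have c2: "A2 = (- q / (2*K) + (- z * r + y * s) / K) * (K * zk) + (- b2 / 2 + x * r / 2) * (-2*x) + L / K * (K * y)"
  proof -
    have "A2 = (y * (L + y * r + zk * s) - zk * q / 2) + x * b2" using e2 eb by simp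
    also have "\<dots> = (- q / (2*K) + (- z * r + y * s) / K) * (K * zk) + (- b2 / 2 + x * r / 2) * (-2*x) + L / K * (K * y)
        + r * (x^2 + y^2 + z * zk)"
      using K by (simp add: field_simps power2_eq_square; simp add: algebra_simps)
    finally show ?thesis using M by simp
  qed
  have c3: "A3 = (- q / (2*K) + (- z * r + y * s) / K) * (-2*y) + (b3 / 2 - x * s / K) * (2*x) + L / K * (2*z)"
  proof -
    have "A3 = (y * q + 2 * z * (L + y * r + zk * s)) / K + x * b3" using e3 eb by simp
    also have "\<dots> = (- q / (2*K) + (- z * r + y * s) / K) * (-2*y) + (b3 / 2 - x * s / K) * (2*x) + L / K * (2*z)
        + 2 * s * (x^2 + y^2 + z * zk) / K"
      using K by (simp add: field_simps power2_eq_square; simp add: algebra_simps)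
    finally show ?thesis using M by simp
  qed
  show ?thesis unfolding vscale_def using K by (simp add: c1 c2 c3; simp add: algebra_simps)
qed



lemma gp_divide: "gp f \<Longrightarrow> gp (\<lambda>p. f p / c)"
  using gp_mult[OF _ gp_const[of "1/c"], of f] by simp

lemma Mk_mem: "(x,y,z) \<in> Mk k \<longleftrightarrow> x^2 + y^2 + z^(k+1) = 0"
  by (simp add: Mk_def)

lemma ev_line:
  fixes y z :: complex
  assumes "y^2 + z^(k+1) = 0"
  shows "eventually (\<lambda>t. (y+t)^2 + z^(k+1) \<noteq> 0) (at 0)"
  unfolding eventually_at
proof (intro exI[of _ "if y = 0 then 1 else norm (2*y)"] conjI ballI impI)
  show "0 < (if y = 0 then 1 else norm (2*y))" by auto
  fix t :: complex assume t: "t \<in> UNIV" "t \<noteq> 0 \<and> dist t 0 < (if y = 0 then 1 else norm (2*y))"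
  have e: "(y+t)^2 + z^(k+1) = t * (2*y + t)" using assms by (simp add: power2_eq_square algebra_simps add_eq_0_iff)
  have "2*y + t \<noteq> 0"
  proof
    assume h: "2*y + t = 0"
    hence "t = - (2*y)" by (simp add: add_eq_0_iff)
    thus False using t by (cases "y = 0") auto
  qed
  thus "(y+t)^2 + z^(k+1) \<noteq> 0" using e t by simp
qed

lemma two_eq: "2 * (a - b) = (0::complex) \<Longrightarrow> a = b" by simp

lemma decomp:
  assumes PV: "poly_vf V" and TV: "tangent_Mk k V"
  shows "\<exists>a b c (l::nat \<Rightarrow> complex). poly3 a \<and> poly3 b \<and> poly3 c \<and>
          (\<forall>p\<in>Mk k. V p = vscale (a p) (Vx k p) + vscale (b p) (Vy k p) + vscale (c p) (Vz p)
              + vscale (\<Sum>i<k. l i * (snd (snd p))^i) (Lam k p))"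
proof -
  define K :: complex where "K = of_nat (k+1)"
  have K: "K \<noteq> 0" unfolding K_def by (rule K_nz)
  define A1 where "A1 p = fst (V p)" for p
  define A2 where "A2 p = fst (snd (V p))" for p
  define A3 where "A3 p = snd (snd (V p))" for p
  have gA: "gp A1" "gp A2" "gp A3" using PV unfolding poly_vf_def gp_poly3 A1_def[abs_def] A2_def[abs_def] A3_def[abs_def] by auto
  obtain a1 b1 where r1: "gp a1" "gp b1" "\<forall>x x' y z. a1 (x,y,z) = a1 (x',y,z) \<and> b1 (x,y,z) = b1 (x',y,z)"
      "\<forall>x y z. x^2 = -(y^2 + z^(k+1)) \<longrightarrow> A1 (x,y,z) = a1 (x,y,z) + x * b1 (x,y,z)"
    using gp_red_x[OF gA(1), of k] by blast
  obtain a2 b2 where r2: "gp a2" "gp b2" "\<forall>x x' y z. a2 (x,y,z) = a2 (x',y,z) \<and> b2 (x,y,z) = b2 (x',y,z)"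
      "\<forall>x y z. x^2 = -(y^2 + z^(k+1)) \<longrightarrow> A2 (x,y,z) = a2 (x,y,z) + x * b2 (x,y,z)"
    using gp_red_x[OF gA(2), of k] by blast
  obtain a3 b3 where r3: "gp a3" "gp b3" "\<forall>x x' y z. a3 (x,y,z) = a3 (x',y,z) \<and> b3 (x,y,z) = b3 (x',y,z)"
      "\<forall>x y z. x^2 = -(y^2 + z^(k+1)) \<longrightarrow> A3 (x,y,z) = a3 (x,y,z) + x * b3 (x,y,z)"
    using gp_red_x[OF gA(3), of k] by blast
  have Mx: "x^2 = -(y^2 + z^(k+1))" if "(x,y,z) \<in> Mk k" for x y z
  proof -
    have "x^2 + (y^2 + z^(k+1)) = 0" using that unfolding Mk_mem by (simp add: add.assoc)
    thus ?thesis by (rule eq_neg_iff_add_eq_0[THEN iffD2])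
  qed
  have tang: "A1 (x,y,z) * (2*x) + A2 (x,y,z) * (2*y) + A3 (x,y,z) * (K * z^k) = 0" if "(x,y,z) \<in> Mk k" for x y z
    using TV that unfolding tangent_Mk_def A1_def A2_def A3_def K_def by (force simp: case_prod_unfold)
  define T0 where "T0 p = -2 * ((fst (snd p))^2 + (snd (snd p))^(k+1)) * b1 p + 2 * fst (snd p) * a2 p + K * (snd (snd p))^k * a3 p" for p
  define T1 where "T1 p = 2 * a1 p + 2 * fst (snd p) * b2 p + K * (snd (snd p))^k * b3 p" for p
  have gT1: "gp T1" unfolding T1_def[abs_def]
    by (intro gp_add gp_mult gp_const gp_Y gp_Z gp_pow r1(1,2) r2(1,2) r3(1,2))
  have noxT: "T0 (x,y,z) = T0 (x',y,z) \<and> T1 (x,y,z) = T1 (x',y,z)" for x x' y z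
    using r1(3)[rule_format, where x=x and x'=x' and y=y and z=z] r2(3)[rule_format, where x=x and x'=x' and y=y and z=z]
      r3(3)[rule_format, where x=x and x'=x' and y=y and z=z]
    by (simp add: T0_def T1_def)
  have T01: "T0 (x,y,z) + x * T1 (x,y,z) = 0" if M: "(x,y,z) \<in> Mk k" for x y z
  proof -
    have "A1 (x,y,z) * (2*x) + A2 (x,y,z) * (2*y) + A3 (x,y,z) * (K * z^k)
        = T0 (x,y,z) + x * T1 (x,y,z) + 2 * b1 (x,y,z) * (x^2 + y^2 + z^(k+1))"
      using r1(4) r2(4) r3(4) Mx[OF M] by (simp add: T0_def T1_def algebra_simps power2_eq_square)
    thus ?thesis using tang[OF M] M unfolding Mk_mem by simp
  qed
  have T0z: "T0 (x,y,z) = 0" and T1w: "y^2 + z^(k+1) \<noteq> 0 \<Longrightarrow> T1 (x,y,z) = 0" for x y z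
  proof -
    define w where "w = csqrt (-(y^2 + z^(k+1)))"
    have w2: "w^2 = -(y^2 + z^(k+1))" unfolding w_def by simp
    have m1: "(w,y,z) \<in> Mk k" and m2: "(-w,y,z) \<in> Mk k" unfolding Mk_mem using w2 by simp_all
    have e1: "T0 (w,y,z) + w * T1 (w,y,z) = 0" using T01[OF m1] .
    have e2: "T0 (w,y,z) - w * T1 (w,y,z) = 0" using T01[OF m2] noxT[where x="-w" and x'=w and y=y and z=z] by simp
    have "2 * T0 (w,y,z) = (T0 (w,y,z) + w * T1 (w,y,z)) + (T0 (w,y,z) - w * T1 (w,y,z))"
      by (simp add: algebra_simps)
    hence T0w: "T0 (w,y,z) = 0" using e1 e2 by simp
    show "T0 (x,y,z) = 0" using T0w noxT[where x=x and x'=w and y=y and z=z] by simp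
    assume nz: "y^2 + z^(k+1) \<noteq> 0"
    have "w \<noteq> 0"
    proof
      assume "w = 0"
      hence "w^2 = 0" by simp
      hence "-(y^2 + z^(k+1)) = 0" using trans[OF w2[symmetric]] by blast
      hence "y^2 + z^(k+1) = 0" by (simp only: neg_equal_0_iff_equal)
      thus False using nz by blast
    qed
    hence "T1 (w,y,z) = 0" using e1 T0w by simp
    thus "T1 (x,y,z) = 0" using noxT[where x=x and x'=w and y=y and z=z] by simp
  qed
  have T1z: "T1 (x,y,z) = 0" for x y z
  proof (cases "y^2 + z^(k+1) = 0")
    case False thus ?thesis using T1w by blast
  next
    case True
    have c: "continuous (at 0) (\<lambda>t. T1 (x, y + t, z))"
      by (rule gp_isCont_comp[OF gT1]) (intro continuous_intros)
    have "eventually (\<lambda>t. T1 (x, y + t, z) = 0) (at 0)"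
      using ev_line[OF True] by eventually_elim (rule T1w)
    from cont_zero[OF c this] show ?thesis by simp
  qed
  define P where "P p = K * a3 p - 2 * snd (snd p) * b1 p" for p
  have gP: "gp P" unfolding P_def[abs_def] by (intro gp_diff gp_mult gp_const gp_Z r1(2) r3(1))
  have T0P: "T0 (x,y,z) = 2*y*(a2 (x,y,z) - y * b1 (x,y,z)) + z^k * P (x,y,z)" for x y z
    by (simp add: T0_def P_def algebra_simps power2_eq_square)
  have P00: "P (x,0,0) = 0" for x
  proof -
    have c: "continuous (at 0) (\<lambda>t. P (x, 0, t))"
      by (rule gp_isCont_comp[OF gP]) (intro continuous_intros)
    have "P (x,0,t) = 0" if "t \<noteq> 0" for t
      using T0P[of x 0 t] T0z[of x 0 t] that by simp
    from cont_zero'[OF c this] show ?thesis by simp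
  qed
  have P0: "P (x,0,z) = 0" for x z
    using T0P[of x 0 z] T0z[of x 0 z] P00[of x] by (cases "z = 0") auto
  obtain q where q: "gp q" "\<forall>x y z. P (x,y,z) = P (x,0,z) + y * q (x,y,z)"
    using gp_div_y[OF gP] by blast
  have Pq: "P (x,y,z) = y * q (x,y,z)" for x y z using q(2) P0 by simp
  define R where "R p = a2 p - fst (snd p) * b1 p + (snd (snd p))^k * q p / 2" for p
  have gR: "gp R" unfolding R_def[abs_def]
    by (intro gp_add gp_diff gp_mult gp_divide gp_Y gp_Z gp_pow r1(2) r2(1) q(1))
  have R2: "2 * y * R (x,y,z) = T0 (x,y,z)" for x y z
    unfolding T0P Pq by (simp add: R_def algebra_simps)
  have Ry: "y \<noteq> 0 \<Longrightarrow> R (x,y,z) = 0" for x y z using R2[of y x z] T0z[of x y z] by simp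
  have R0: "R (x,y,z) = 0" for x y z
  proof (cases "y = 0")
    case False thus ?thesis using Ry by blast
  next
    case True
    have c: "continuous (at 0) (\<lambda>t. R (x, t, z))"
      by (rule gp_isCont_comp[OF gR]) (intro continuous_intros)
    from cont_zero'[OF c Ry] show ?thesis using True by simp
  qed
  obtain r where r: "gp r" "\<forall>x y z. b1 (x,y,z) = b1 (x,0,z) + y * r (x,y,z)"
    using gp_div_y[OF r1(2)] by blast
  obtain l s where ls: "gp s" "\<forall>x y x' y' z. s (x,y,z) = s (x',y',z)"
      "\<forall>z. b1 (0,0,z) = (\<Sum>i<k. l i * z^i) + z^k * s (0,0,z)"
    using gp_split_z[OF r1(2), of k] by blast
  have b1e: "b1 (x,y,z) = (\<Sum>i<k. l i * z^i) + y * r (x,y,z) + z^k * s (x,y,z)" for x y z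
    using r(2)[rule_format, where x=x and y=y and z=z] r1(3)[rule_format, where x=x and x'=0 and y=0 and z=z] ls(3)[rule_format, of z]
      ls(2)[rule_format, where x=x and y=y and x'=0 and y'=0 and z=z]
    by simp
  define a where "a p = - q p / (2*K) + (- snd (snd p) * r p + fst (snd p) * s p) / K" for p
  define b where "b p = b3 p / 2 - fst p * s p / K" for p
  define c where "c p = - b2 p / 2 + fst p * r p / 2" for p
  define l' where "l' i = l i / K" for i
  have "poly3 a" unfolding gp_poly3[symmetric] a_def[abs_def]
    by (intro gp_add gp_uminus gp_mult gp_divide gp_X gp_Y gp_Z q(1) r(1) ls(1))
  moreover have "poly3 b" unfolding gp_poly3[symmetric] b_def[abs_def]
    by (intro gp_diff gp_mult gp_divide gp_X r3(2) ls(1))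
  moreover have "poly3 c" unfolding gp_poly3[symmetric] c_def[abs_def]
    by (intro gp_add gp_uminus gp_mult gp_divide gp_X r2(2) r(1))
  moreover have "V p = vscale (a p) (Vx k p) + vscale (b p) (Vy k p) + vscale (c p) (Vz p)
              + vscale (\<Sum>i<k. l' i * (snd (snd p))^i) (Lam k p)" if M: "p \<in> Mk k" for p
  proof -
    obtain x y z where p: "p = (x,y,z)" by (metis prod_cases3)
    have M': "(x,y,z) \<in> Mk k" using M p by simp
    have xx: "x^2 = -(y^2 + z^(k+1))" using Mx[OF M'] .
    have e1: "A1 (x,y,z) = (- y * b2 (x,y,z) - K / 2 * z^k * b3 (x,y,z)) + x * b1 (x,y,z)"
    proof -
      have "2 * (a1 (x,y,z) - (- y * b2 (x,y,z) - K / 2 * z^k * b3 (x,y,z))) = T1 (x,y,z)"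
        unfolding T1_def by (simp add: field_simps; simp add: algebra_simps)
      hence "2 * (a1 (x,y,z) - (- y * b2 (x,y,z) - K / 2 * z^k * b3 (x,y,z))) = 0" using T1z[of x y z] by (simp only:)
      hence "a1 (x,y,z) = - y * b2 (x,y,z) - K / 2 * z^k * b3 (x,y,z)" by (rule two_eq)
      thus ?thesis using r1(4) xx by simp
    qed
    have e2: "A2 (x,y,z) = (y * b1 (x,y,z) - z^k * q (x,y,z) / 2) + x * b2 (x,y,z)"
    proof -
      have "R (x,y,z) = 0" by (rule R0)
      hence "a2 (x,y,z) = y * b1 (x,y,z) - z^k * q (x,y,z) / 2"
        unfolding R_def by (simp add: algebra_simps add_eq_0_iff eq_diff_eq)
      thus ?thesis using r2(4) xx by simp
    qed
    have e3: "A3 (x,y,z) = (y * q (x,y,z) + 2 * z * b1 (x,y,z)) / K + x * b3 (x,y,z)"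
    proof -
      have "P (x,y,z) = y * q (x,y,z)" by (rule Pq)
      hence "a3 (x,y,z) = (y * q (x,y,z) + 2 * z * b1 (x,y,z)) / K"
        unfolding P_def using K by (simp add: field_simps)
      thus ?thesis using r3(4) xx by simp
    qed
    have Mz: "x^2 + y^2 + z * z^k = 0" using M' unfolding Mk_mem by simp
    have fa: "(A1 (x,y,z), A2 (x,y,z), A3 (x,y,z)) =
        vscale (- q (x,y,z) / (2*K) + (- z * r (x,y,z) + y * s (x,y,z)) / K) (0, K * z^k, -2*y)
       + vscale (b3 (x,y,z) / 2 - x * s (x,y,z) / K) (- K * z^k, 0, 2*x)
       + vscale (- b2 (x,y,z) / 2 + x * r (x,y,z) / 2) (2*y, -2*x, 0)
       + vscale ((\<Sum>i<k. l i * z^i) / K) (K * x, K * y, 2*z)"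
      by (rule final_alg[OF K Mz e1 e2 e3 b1e])
    have V: "V (x,y,z) = (A1 (x,y,z), A2 (x,y,z), A3 (x,y,z))" unfolding A1_def A2_def A3_def by simp
    have L: "(\<Sum>i<k. l' i * z^i) = (\<Sum>i<k. l i * z^i) / K" unfolding l'_def sum_divide_distrib by (simp add: field_simps)
    show ?thesis unfolding p V fa L
      by (simp add: L a_def b_def c_def Vx_def Vy_def Vz_def Lam_def K_def)
  qed
  ultimately show ?thesis by blast
qed



lemma part1: "\<forall>V\<in>{Vx k, Vy k, Vz, Lam k}. poly_vf V \<and> tangent_Mk k V"
proof -
  have pv: "poly_vf V" if "gp (\<lambda>p. fst (V p))" "gp (\<lambda>p. fst (snd (V p)))" "gp (\<lambda>p. snd (snd (V p)))" for V
    using that unfolding poly_vf_def gp_poly3 by blast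
  have "poly_vf (Vx k)" by (rule pv) (simp_all add: Vx_def case_prod_unfold; intro gp_uminus gp_mult gp_const gp_pow gp_Z gp_Y)+
  moreover have "poly_vf (Vy k)" by (rule pv) (simp_all add: Vy_def case_prod_unfold; intro gp_uminus gp_mult gp_const gp_pow gp_Z gp_X)+
  moreover have "poly_vf Vz" by (rule pv) (simp_all add: Vz_def case_prod_unfold; intro gp_uminus gp_mult gp_const gp_X gp_Y)+
  moreover have "poly_vf (Lam k)" by (rule pv) (simp_all add: Lam_def case_prod_unfold; intro gp_uminus gp_mult gp_const gp_X gp_Y gp_Z)+
  moreover have "tangent_Mk k (Vx k)" unfolding tangent_Mk_def Vx_def by (auto simp: algebra_simps)
  moreover have "tangent_Mk k (Vy k)" unfolding tangent_Mk_def Vy_def by (auto simp: algebra_simps)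
  moreover have "tangent_Mk k Vz" unfolding tangent_Mk_def Vz_def by (auto simp: algebra_simps)
  moreover have "tangent_Mk k (Lam k)" unfolding tangent_Mk_def Lam_def
  proof (clarsimp)
    fix x y z assume "(x,y,z) \<in> Mk k"
    hence M: "x^2 + y^2 + z^(k+1) = 0" by (simp add: Mk_def)
    have "(1 + of_nat k) * x * (2 * x) + (1 + of_nat k) * y * (2 * y) + 2 * z * ((1 + of_nat k) * z ^ k)
       = 2 * (1 + of_nat k) * (x^2 + y^2 + z^(k+1))" by (simp add: algebra_simps power2_eq_square)
    thus "(1 + of_nat k) * x * (2 * x) + (1 + of_nat k) * y * (2 * y) + 2 * z * ((1 + of_nat k) * z ^ k) = (0::complex)"
      using M by simp
  qed
  ultimately show ?thesis by auto
qed

lemma odd_part: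
  fixes a :: "pt3 \<Rightarrow> complex"
  assumes "gp a"
  shows "\<exists>Od. continuous_on UNIV Od \<and> (\<forall>y z. y^2 = -(z^(k+1)) \<longrightarrow> a (0,y,z) - a (0,-y,z) = 2 * y * Od z)"
proof -
  obtain S c where 1: "finite S" "\<And>p. a p = (\<Sum>m\<in>S. c m * mon m p)" using gp_rep[OF assms] by blast
  define Od where "Od z = (\<Sum>m\<in>S. c m * 0 ^ fst m * ((if even (fst (snd m)) then 0 else 1) * (-(z^(k+1)))^(fst (snd m) div 2)) * z ^ snd (snd m))" for z :: complex
  have "continuous_on UNIV Od" unfolding Od_def by (intro continuous_intros)
  moreover have "a (0,y,z) - a (0,-y,z) = 2 * y * Od z" if h: "y^2 = -(z^(k+1))" for y z
  proof -
    have t: "y^b - (-y)^b = 2 * y * ((if even b then 0 else 1) * (-(z^(k+1)))^(b div 2))" for b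
    proof -
      have "y^b - (-y)^b = ((if even b then 1 else y) - (if even b then 1 else -y)) * (y^2)^(b div 2)"
        by (subst (1 2) pow_split) (simp add: algebra_simps)
      thus ?thesis unfolding h by simp
    qed
    have "a (0,y,z) - a (0,-y,z) = (\<Sum>m\<in>S. c m * 0 ^ fst m * z ^ snd (snd m) * (y ^ fst (snd m) - (-y) ^ fst (snd m)))"
      unfolding 1(2) mon_def sum_subtractf[symmetric] by (intro sum.cong refl) (simp add: algebra_simps)
    also have "\<dots> = 2 * y * Od z" unfolding t Od_def sum_distrib_left by (intro sum.cong refl) (simp add: algebra_simps)
    finally show ?thesis .
  qed
  ultimately show ?thesis by blast
qed

lemma part3:
  assumes pa: "poly3 a" and comb: "\<forall>p\<in>Mk k. vscale (a p) (Vx k p) + vscale (b p) (Vy k p) + vscale (c p) (Vz p)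
              + vscale (\<Sum>i<k. l i * (snd (snd p))^i) (Lam k p) = 0"
  shows "\<forall>i<k. l i = 0"
proof -
  define K :: complex where "K = of_nat (k+1)"
  have K: "K \<noteq> 0" unfolding K_def by (rule K_nz)
  define L where "L z = (\<Sum>i<k. l i * z^i)" for z :: complex
  have c2: "a (0,y,z) * z^k + L z * y = 0" if "(0,y,z) \<in> Mk k" for y z
  proof -
    have E: "vscale (a (0,y,z)) (Vx k (0,y,z)) + vscale (b (0,y,z)) (Vy k (0,y,z)) + vscale (c (0,y,z)) (Vz (0,y,z))
              + vscale (L z) (Lam k (0,y,z)) = 0"
      using comb[rule_format, OF that] unfolding L_def by simp
    have "fst (snd (vscale (a (0,y,z)) (Vx k (0,y,z)) + vscale (b (0,y,z)) (Vy k (0,y,z)) + vscale (c (0,y,z)) (Vz (0,y,z))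
              + vscale (L z) (Lam k (0,y,z)))) = fst (snd (0::pt3))"
      using E by (rule arg_cong)
    hence "K * (a (0,y,z) * z^k + L z * y) = 0"
      by (simp add: vscale_def Vx_def Vy_def Vz_def Lam_def K_def algebra_simps)
    thus ?thesis using K by simp
  qed
  obtain Od where Od: "continuous_on UNIV Od" "\<forall>y z. y^2 = -(z^(k+1)) \<longrightarrow> a (0,y,z) - a (0,-y,z) = 2 * y * Od z"
    using odd_part[of a k] pa unfolding gp_poly3 by blast
  have LO: "L z = - (z^k * Od z)" if z: "z \<noteq> 0" for z
  proof -
    define y where "y = csqrt (-(z^(k+1)))"
    have y2: "y^2 = -(z^(k+1))" unfolding y_def by simp
    have "y \<noteq> 0"
    proof
      assume "y = 0"
      hence "y^2 = 0" by simp
      hence "-(z^(k+1)) = 0" using trans[OF y2[symmetric]] by blast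
      thus False using z by simp
    qed
    have m1: "(0,y,z) \<in> Mk k" and m2: "(0,-y,z) \<in> Mk k" using y2 by (simp_all add: Mk_def)
    have "(a (0,y,z) - a (0,-y,z)) * z^k + 2 * y * L z = 0"
      using c2[OF m1] c2[OF m2] by (simp add: algebra_simps)
    hence "2 * y * (Od z * z^k + L z) = 0" using Od(2) y2 by (simp add: algebra_simps)
    hence "Od z * z^k + L z = 0" using \<open>y \<noteq> 0\<close> by simp
    thus ?thesis by (simp add: algebra_simps add_eq_0_iff)
  qed
  show ?thesis
  proof (intro allI impI)
    fix i assume "i < k"
    thus "l i = 0"
    proof (induction i rule: less_induct)
      case (less i)
      define g where "g z = (\<Sum>m\<in>{i..<k}. l m * z^(m - i))" for z :: complex
      have Lg: "L z = z^i * g z" for z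
      proof -
        have "L z = (\<Sum>m\<in>{i..<k}. l m * z^m)"
          unfolding L_def using less.IH less.prems
          by (intro sum.mono_neutral_right) auto
        also have "\<dots> = z^i * g z" unfolding g_def sum_distrib_left
          by (intro sum.cong refl) (auto simp: power_add[symmetric])
        finally show ?thesis .
      qed
      define h where "h z = g z + z^(k - i) * Od z" for z
      have hc: "isCont h 0" unfolding h_def g_def
        using Od(1) by (intro continuous_intros) (auto simp: continuous_on_eq_continuous_at)
      have "h z = 0" if "z \<noteq> 0" for z
      proof -
        have "z^i * g z = - (z^k * Od z)" using LO[OF that] Lg by simp
        also have "z^k = z^i * z^(k-i)" using less.prems by (simp add: power_add[symmetric])
        finally have "z^i * (g z + z^(k - i) * Od z) = 0" by (simp add: algebra_simps)
        thus ?thesis using that unfolding h_def by simp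
      qed
      from cont_zero'[OF hc this] have "h 0 = 0" .
      moreover have "g 0 = l i"
      proof -
        have "g 0 = (\<Sum>m\<in>{i..<k}. if m = i then l m else 0)" unfolding g_def by (intro sum.cong refl) auto
        also have "\<dots> = l i" using less.prems by simp
        finally show ?thesis .
      qed
      ultimately show ?case using less.prems unfolding h_def by (simp add: zero_power)
    qed
  qed
qed


theorem lemma4p5:
  fixes k :: nat
  shows
    "(\<forall>V\<in>{Vx k, Vy k, Vz, Lam k}. poly_vf V \<and> tangent_Mk k V)
   \<and> (\<forall>V. poly_vf V \<and> tangent_Mk k V \<longrightarrow>
        (\<exists>a b c (l::nat \<Rightarrow> complex). poly3 a \<and> poly3 b \<and> poly3 c \<and>
          (\<forall>p\<in>Mk k. V p = vscale (a p) (Vx k p) + vscale (b p) (Vy k p) + vscale (c p) (Vz p)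
              + vscale (\<Sum>i<k. l i * (snd (snd p))^i) (Lam k p))))
   \<and> (\<forall>a b c (l::nat \<Rightarrow> complex). poly3 a \<and> poly3 b \<and> poly3 c \<and>
          (\<forall>p\<in>Mk k. vscale (a p) (Vx k p) + vscale (b p) (Vy k p) + vscale (c p) (Vz p)
              + vscale (\<Sum>i<k. l i * (snd (snd p))^i) (Lam k p) = 0)
        \<longrightarrow> (\<forall>i<k. l i = 0))
   \<and> hamiltonian k (Vx k) \<and> hamiltonian k (Vy k) \<and> hamiltonian k Vz
   \<and> \<not> symplectic_vf k (Lam k)"
proof (intro conjI)
  show "\<forall>V\<in>{Vx k, Vy k, Vz, Lam k}. poly_vf V \<and> tangent_Mk k V" by (rule part1)
  show "\<forall>V. poly_vf V \<and> tangent_Mk k V \<longrightarrow>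
        (\<exists>a b c (l::nat \<Rightarrow> complex). poly3 a \<and> poly3 b \<and> poly3 c \<and>
          (\<forall>p\<in>Mk k. V p = vscale (a p) (Vx k p) + vscale (b p) (Vy k p) + vscale (c p) (Vz p)
              + vscale (\<Sum>i<k. l i * (snd (snd p))^i) (Lam k p)))"
    using decomp by blast
  show "\<forall>a b c (l::nat \<Rightarrow> complex). poly3 a \<and> poly3 b \<and> poly3 c \<and>
          (\<forall>p\<in>Mk k. vscale (a p) (Vx k p) + vscale (b p) (Vy k p) + vscale (c p) (Vz p)
              + vscale (\<Sum>i<k. l i * (snd (snd p))^i) (Lam k p) = 0)
        \<longrightarrow> (\<forall>i<k. l i = 0)"
    using part3 by blast
  show "hamiltonian k (Vx k)" by (rule ham_Vx)
  show "hamiltonian k (Vy k)" by (rule ham_Vy)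
  show "hamiltonian k Vz" by (rule ham_Vz)
  show "\<not> symplectic_vf k (Lam k)" by (rule not_sympl)
qed

end
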